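(* For every integer $q\ge2$, the formal codegrees $(\mathfrak{c}_s)$ of the interpolated fusion ring $\mathcal{R}_q$ satisfy $2\sum_s\frac{1}{\mathfrak{c}_s^2}\le1+\frac{1}{\mathfrak{c}_{C_0}}$, where $C_0$ is the first column of the table (so $\mathfrak{c}_{C_0}=\mathrm{FPdim}(\mathcal{R}_q)$).
   Context: $\zeta_n=\exp(2\pi i/n)$. For integer $q\ge2$, $\mathcal{R}_q$ is the commutative fusion ring whose basis is the set of rows of the formal table $T_q=(\lambda_{x,s})$ below, with eigentable $T_q$ and structure constants $N_{x,y}^z=\sum_s\lambda_{x,s}\lambda_{y,s}\overline{\lambda_{z,s}}/\mathfrak{c}_s$, where the formal codegrees are $\mathfrak{c}_s=\sum_x|\lambda_{x,s}|^2$. Table $T_q$ (rows $x_{d,c}$; entries listed in the column order given): Case $q$ even. Columns: $C_0$; $C_1$; $A_k$ ($1\le k\le\frac{q-2}{2}$); $B_k$ ($1\le k\le\frac q2$). Rows: $x_{1,1}$: $1,1,1,1$. $x_{q-1,c}$ ($1\le c\le \frac q2$): $q-1,\,-1,\,0,\,-\zeta_{q+1}^{kc}-\zeta_{q+1}^{-kc}$. $x_{q,1}$: $q,0,1,-1$. $x_{q+1,c}$ ($1\le c\le\frac{q-2}{2}$): $q+1,\,1,\,\zeta_{q-1}^{kc}+\zeta_{q-1}^{-kc},\,0$. Case $q\equiv-1\pmod 4$. Columns: $C_0$; $D_k$ ($k\in\{1,2\}$); $A_k$ ($1\le k\le\frac{q-3}{4}$); $B_k$ ($1\le k\le\frac{q-3}{4}$);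 $E$ (with $k=\frac{q+1}{4}$). Rows: $x_{1,1}$: all $1$. $x_{\frac{q-1}{2},c}$ ($c\in\{1,2\}$): $\frac{q-1}2,\ \frac{-1+i(-1)^{k+c}\sqrt q}{2},\ 0,\ (-1)^{k+1},\ (-1)^{k+1}$. $x_{q-1,c}$ ($1\le c\le\frac{q-3}4$): $q-1,\,-1,\,0,\,-\zeta_{q+1}^{2kc}-\zeta_{q+1}^{-2kc},\,-2(-1)^c$. $x_{q,1}$: $q,0,1,-1,-1$. $x_{q+1,c}$ ($1\le c\le\frac{q-3}4$): $q+1,\,1,\,\zeta_{q-1}^{2kc}+\zeta_{q-1}^{-2kc},\,0,\,0$. Case $q\equiv1\pmod4$. Columns: $C_0$; $D_k$ ($k\in\{1,2\}$); $A_k$ ($1\le k\le\frac{q-5}4$); $E$ (with $k=\frac{q-1}4$); $B_k$ ($1\le k\le\frac{q-1}4$). Rows: $x_{1,1}$: all $1$. $x_{\frac{q+1}2,c}$ ($c\in\{1,2\}$): $\frac{q+1}2,\ \frac{1+(-1)^{k+c}\sqrt q}{2},\ (-1)^k,\ (-1)^k,\ 0$. $x_{q-1,c}$ ($1\le c\le\frac{q-1}4$): $q-1,\,-1,\,0,\,0,\,-\zeta_{q+1}^{2kc}-\zeta_{q+1}^{-2kc}$. $x_{q,1}$: $q,0,1,1,-1$. $x_{q+1,c}$ ($1\le c\le\frac{q-5}4$): $q+1,\,1,\,\zeta_{q-1}^{2kc}+\zeta_{q-1}^{-2kc},\,2(-1)^c,\,0$. *)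

theory Defs
  imports Complex_Main
begin

text \<open>Rows: X1 = x_{1,1}; Xh c = x_{(q-+1)/2,c}; Xm c = x_{q-1,c}; Xq = x_{q,1}; Xp c = x_{q+1,c}.  Entries outside the index sets are junk (0) and never used.\<close>

datatype frow = X1 | Xh nat | Xm nat | Xq | Xp nat
datatype fcol = C0 | C1 | D nat | A nat | B nat | E

definition zeta :: "nat \<Rightarrow> int \<Rightarrow> complex" where
  "zeta n m = exp (2 * pi * \<i> * of_int m / of_nat n)"

definition frows :: "nat \<Rightarrow> frow set" where
  "frows q =
    (if even q then {X1} \<union> Xm ` {1..q div 2} \<union> {Xq} \<union> Xp ` {1..(q-2) div 2}
     else if q mod 4 = 3 then
       {X1} \<union> Xh ` {1,2} \<union> Xm ` {1..(q-3) div 4} \<union> {Xq} \<union> Xp ` {1..(q-3) div 4}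
     else
       {X1} \<union> Xh ` {1,2} \<union> Xm ` {1..(q-1) div 4} \<union> {Xq} \<union> Xp ` {1..(q-5) div 4})"

definition fcols :: "nat \<Rightarrow> fcol set" where
  "fcols q =
    (if even q then {C0, C1} \<union> A ` {1..(q-2) div 2} \<union> B ` {1..q div 2}
     else if q mod 4 = 3 then
       {C0} \<union> D ` {1,2} \<union> A ` {1..(q-3) div 4} \<union> B ` {1..(q-3) div 4} \<union> {E}
     else
       {C0} \<union> D ` {1,2} \<union> A ` {1..(q-5) div 4} \<union> {E} \<union> B ` {1..(q-1) div 4})"

definition ftable :: "nat \<Rightarrow> frow \<Rightarrow> fcol \<Rightarrow> complex" where
  "ftable q x s =
    (let sq = complex_of_real (sqrt (real q)) in
    (if even q then
      (case x of
         X1 \<Rightarrow> 1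
       | Xm c \<Rightarrow> (case s of C0 \<Rightarrow> of_nat q - 1 | C1 \<Rightarrow> -1 | A k \<Rightarrow> 0
                  | B k \<Rightarrow> - zeta (q+1) (int (k*c)) - zeta (q+1) (- int (k*c)) | _ \<Rightarrow> 0)
       | Xq \<Rightarrow> (case s of C0 \<Rightarrow> of_nat q | C1 \<Rightarrow> 0 | A k \<Rightarrow> 1 | B k \<Rightarrow> -1 | _ \<Rightarrow> 0)
       | Xp c \<Rightarrow> (case s of C0 \<Rightarrow> of_nat q + 1 | C1 \<Rightarrow> 1
                  | A k \<Rightarrow> zeta (q-1) (int (k*c)) + zeta (q-1) (- int (k*c)) | B k \<Rightarrow> 0 | _ \<Rightarrow> 0)
       | _ \<Rightarrow> 0)
     else if q mod 4 = 3 then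
      (case x of
         X1 \<Rightarrow> 1
       | Xh c \<Rightarrow> (case s of C0 \<Rightarrow> of_nat ((q-1) div 2)
                  | D k \<Rightarrow> (-1 + \<i> * (-1)^(k+c) * sq) / 2
                  | A k \<Rightarrow> 0
                  | B k \<Rightarrow> (-1)^(k+1)
                  | E \<Rightarrow> (-1)^((q+1) div 4 + 1) | _ \<Rightarrow> 0)
       | Xm c \<Rightarrow> (case s of C0 \<Rightarrow> of_nat q - 1 | D k \<Rightarrow> -1 | A k \<Rightarrow> 0
                  | B k \<Rightarrow> - zeta (q+1) (int (2*k*c)) - zeta (q+1) (- int (2*k*c))
                  | E \<Rightarrow> - 2 * (-1)^c | _ \<Rightarrow> 0)
       | Xq \<Rightarrow> (case s of C0 \<Rightarrow> of_nat q | D k \<Rightarrow> 0 | A k \<Rightarrow> 1 | B k \<Rightarrow> -1 | E \<Rightarrow> -1 | _ \<Rightarrow> 0)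
       | Xp c \<Rightarrow> (case s of C0 \<Rightarrow> of_nat q + 1 | D k \<Rightarrow> 1
                  | A k \<Rightarrow> zeta (q-1) (int (2*k*c)) + zeta (q-1) (- int (2*k*c))
                  | B k \<Rightarrow> 0 | E \<Rightarrow> 0 | _ \<Rightarrow> 0))
     else
      (case x of
         X1 \<Rightarrow> 1
       | Xh c \<Rightarrow> (case s of C0 \<Rightarrow> of_nat ((q+1) div 2)
                  | D k \<Rightarrow> (1 + (-1)^(k+c) * sq) / 2
                  | A k \<Rightarrow> (-1)^k
                  | E \<Rightarrow> (-1)^((q-1) div 4)
                  | B k \<Rightarrow> 0 | _ \<Rightarrow> 0)
       | Xm c \<Rightarrow> (case s of C0 \<Rightarrow> of_nat q - 1 | D k \<Rightarrow> -1 | A k \<Rightarrow> 0 | E \<Rightarrow> 0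
                  | B k \<Rightarrow> - zeta (q+1) (int (2*k*c)) - zeta (q+1) (- int (2*k*c)) | _ \<Rightarrow> 0)
       | Xq \<Rightarrow> (case s of C0 \<Rightarrow> of_nat q | D k \<Rightarrow> 0 | A k \<Rightarrow> 1 | E \<Rightarrow> 1 | B k \<Rightarrow> -1 | _ \<Rightarrow> 0)
       | Xp c \<Rightarrow> (case s of C0 \<Rightarrow> of_nat q + 1 | D k \<Rightarrow> 1
                  | A k \<Rightarrow> zeta (q-1) (int (2*k*c)) + zeta (q-1) (- int (2*k*c))
                  | E \<Rightarrow> 2 * (-1)^c | B k \<Rightarrow> 0 | _ \<Rightarrow> 0))))"

definition fcodeg :: "nat \<Rightarrow> fcol \<Rightarrow> real" where
  "fcodeg q s = (\<Sum>x\<in>frows q. (cmod (ftable q x s))^2)"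

end

theory Submission
  imports Defs "HOL-Analysis.Analysis"
begin


lemma zeta_add: "zeta N a * zeta N b = zeta N (a + b)"
  unfolding zeta_def by (simp add: exp_add[symmetric] add_divide_distrib algebra_simps)

lemma zeta_neg: "zeta N (- a) = inverse (zeta N a)"
  unfolding zeta_def by (simp add: exp_minus[symmetric])

lemma zeta_pow: "zeta N a ^ c = zeta N (a * int c)"
proof -
  have "zeta N (a * int c) = exp (of_nat c * (2 * pi * \<i> * of_int a / of_nat N))"
    unfolding zeta_def by (simp add: algebra_simps)
  then show ?thesis by (simp only: exp_of_nat_mult zeta_def)
qed

lemma zeta_cnj: "cnj (zeta N a) = zeta N (- a)"
  unfolding zeta_def by (simp add: exp_cnj)

lemma zeta_one: assumes "N > 0" "int N dvd a" shows "zeta N a = 1"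
proof -
  obtain t where t: "a = int N * t" using assms by (auto elim: dvdE)
  have "zeta N a = exp ((2 * of_int t * pi) * \<i>)"
    unfolding zeta_def t using assms by (simp add: field_simps)
  also have "\<dots> = 1" by (rule exp_integer_2pi) simp
  finally show ?thesis .
qed

lemma zeta_one_iff: assumes "N > 0" "zeta N a = 1" shows "int N dvd a"
proof -
  from assms(2) obtain n :: int where "2 * pi * of_int a / real N = of_int (2 * n) * pi"
    unfolding zeta_def exp_eq_1 by auto
  then have "real_of_int a = real_of_int (int N * n)" using assms(1) by (simp add: field_simps)
  then have "a = int N * n" by linarith
  then show ?thesis by simp
qed

lemma rev_sum: fixes z :: complex assumes "m < n"
  shows "(\<Sum>c=1..m. z ^ (n - c)) = (\<Sum>c=n-m..n-1. z ^ c)"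
  using assms
proof (intro sum.reindex_bij_witness[where i="\<lambda>c. n - c" and j="\<lambda>c. n - c"])
qed auto

lemma key:
  fixes N n m b :: nat
  assumes N: "N > 0" and d1: "int N dvd int (2*b*n)" and d2: "\<not> int N dvd int (2*b)"
    and nm: "n = 2*m+1 \<or> (n = 2*m+2 \<and> int N dvd int (2*b*(m+1)))"
  shows "(\<Sum>c=1..m. (cmod (zeta N (int (b*c)) + zeta N (- int (b*c))))^2)
         = real (2*m) - (if n = 2*m+1 then 1 else 2)"
proof -
  define z where "z = zeta N (int (2*b))"
  have zn: "z ^ n = 1" unfolding z_def zeta_pow using zeta_one[OF N] d1 by simp
  have z1: "z \<noteq> 1" unfolding z_def using zeta_one_iff[OF N] d2 by blast
  have gs: "(\<Sum>c<n. z ^ c) = 0" using zn z1 by (simp add: sum_gp_strict)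
  have n1: "n \<ge> 1" using nm by auto
  have "{..<n} = insert 0 {1..n-1}" using n1 by auto
  then have gs1: "(\<Sum>c=1..n-1. z ^ c) = -1" using gs by (simp add: add_eq_0_iff)
  have trm: "complex_of_real ((cmod (zeta N (int (b*c)) + zeta N (- int (b*c))))^2)
      = 2 + z ^ c + z ^ (n - c)" if "c \<le> n" for c
  proof -
    define w where "w = zeta N (int (b*c))"
    have cw: "cnj w = zeta N (- int (b*c))" unfolding w_def by (simp add: zeta_cnj)
    have ww: "w * cnj w = 1" unfolding w_def zeta_cnj zeta_add using zeta_one[OF N] by simp
    have w2: "w ^ 2 = z ^ c" unfolding w_def z_def zeta_pow power2_eq_square zeta_add
      by (simp add: algebra_simps)
    have "z ^ (n - c) * z ^ c = 1" using zn that by (simp add: power_add[symmetric])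
    moreover have "cnj w ^ 2 * w ^ 2 = 1" using ww by (simp add: power_mult_distrib[symmetric] mult.commute)
    ultimately have cw2: "cnj w ^ 2 = z ^ (n - c)" using w2
      by (metis mult_cancel_right mult_zero_left zero_neq_one)
    have "complex_of_real ((cmod (w + cnj w))^2) = (w + cnj w) * cnj (w + cnj w)"
      by (rule complex_norm_square)
    also have "\<dots> = w^2 + cnj w ^ 2 + 2 * (w * cnj w)" by (simp add: power2_eq_square algebra_simps)
    also have "\<dots> = 2 + z ^ c + z ^ (n - c)" using ww w2 cw2 by simp
    finally show ?thesis unfolding cw[symmetric] w_def .
  qed
  have "complex_of_real (\<Sum>c=1..m. (cmod (zeta N (int (b*c)) + zeta N (- int (b*c))))^2)
      = (\<Sum>c=1..m. 2 + z ^ c + z ^ (n - c))"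
    unfolding of_real_sum using nm by (intro sum.cong refl trm) auto
  also have "\<dots> = 2 * of_nat m + (\<Sum>c=1..m. z ^ c) + (\<Sum>c=n-m..n-1. z ^ c)"
  proof -
    have "m < n" using nm by auto
    then show ?thesis using rev_sum[of m n z] by (simp add: sum.distrib)
  qed
  also have "\<dots> = complex_of_real (real (2*m) - (if n = 2*m+1 then 1 else 2))"
  proof (cases "n = 2*m+1")
    case True
    have "{1..n-1} = {1..m} \<union> {n-m..n-1}" using True by auto
    then have "(\<Sum>c=1..n-1. z ^ c) = (\<Sum>c=1..m. z ^ c) + (\<Sum>c=n-m..n-1. z ^ c)"
      using True by (simp add: sum.union_disjoint ivl_disj_int)
    then show ?thesis using gs1 True by simp
  next
    case False
    then have n2: "n = 2*m+2" and dm: "int N dvd int (2*b*(m+1))" using nm by auto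
    have zm: "z ^ (m+1) = 1" unfolding z_def zeta_pow using zeta_one[OF N] dm by (simp add: algebra_simps)
    have e: "{1..n-1} = {1..m} \<union> ({m+1} \<union> {n-m..n-1})" using n2 by auto
    have eq: "(\<Sum>c=1..n-1. z ^ c) = (\<Sum>c=1..m. z ^ c) + (z ^ (m+1) + (\<Sum>c=n-m..n-1. z ^ c))"
      unfolding e using n2 by (simp add: sum.union_disjoint)
    have s12: "(\<Sum>c=1..m. z ^ c) + (\<Sum>c=n-m..n-1. z ^ c) = -2"
      using eq unfolding gs1 zm by (simp add: algebra_simps add_eq_0_iff)
    have "2 * of_nat m + (\<Sum>c=1..m. z ^ c) + (\<Sum>c=n-m..n-1. z ^ c) = 2 * of_nat m - 2"
      using s12 by (simp only: add.assoc) simp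
    then show ?thesis using False by simp
  qed
  finally show ?thesis by (simp only: of_real_eq_iff)
qed

lemma sum_rows_even:
  assumes "finite M" "finite P"
  shows "sum f ({X1} \<union> Xm ` M \<union> {Xq} \<union> Xp ` P)
       = f X1 + (\<Sum>c\<in>M. f (Xm c)) + f Xq + (\<Sum>c\<in>P. f (Xp c))"
proof -
  have "sum f ({X1} \<union> Xm ` M \<union> {Xq} \<union> Xp ` P)
      = sum f ({X1} \<union> Xm ` M \<union> {Xq}) + sum f (Xp ` P)"
    using assms by (intro sum.union_disjoint) auto
  also have "sum f ({X1} \<union> Xm ` M \<union> {Xq}) = sum f ({X1} \<union> Xm ` M) + f Xq"
    using assms by (subst sum.union_disjoint) auto
  also have "sum f ({X1} \<union> Xm ` M) = f X1 + sum f (Xm ` M)"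
    using assms by (subst sum.union_disjoint) auto
  also have "sum f (Xm ` M) = (\<Sum>c\<in>M. f (Xm c))" by (simp add: sum.reindex inj_on_def)
  also have "sum f (Xp ` P) = (\<Sum>c\<in>P. f (Xp c))" by (simp add: sum.reindex inj_on_def)
  finally show ?thesis .
qed

lemma sum_rows_odd:
  assumes "finite M" "finite P"
  shows "sum f ({X1} \<union> Xh ` {1,2} \<union> Xm ` M \<union> {Xq} \<union> Xp ` P)
       = f X1 + f (Xh 1) + f (Xh 2) + (\<Sum>c\<in>M. f (Xm c)) + f Xq + (\<Sum>c\<in>P. f (Xp c))"
proof -
  have "sum f ({X1} \<union> Xh ` {1,2} \<union> Xm ` M \<union> {Xq} \<union> Xp ` P)
      = sum f ({X1} \<union> Xh ` {1,2} \<union> Xm ` M \<union> {Xq}) + sum f (Xp ` P)"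
    using assms by (intro sum.union_disjoint) auto
  also have "sum f ({X1} \<union> Xh ` {1,2} \<union> Xm ` M \<union> {Xq}) = sum f ({X1} \<union> Xh ` {1,2} \<union> Xm ` M) + f Xq"
    using assms by (subst sum.union_disjoint) auto
  also have "sum f ({X1} \<union> Xh ` {1,2} \<union> Xm ` M) = sum f ({X1} \<union> Xh ` {1,2}) + sum f (Xm ` M)"
    using assms by (subst sum.union_disjoint) auto
  also have "sum f ({X1} \<union> Xh ` {1,2}) = f X1 + f (Xh 1) + f (Xh 2)" by (simp add: algebra_simps)
  also have "sum f (Xm ` M) = (\<Sum>c\<in>M. f (Xm c))" by (simp add: sum.reindex inj_on_def)
  also have "sum f (Xp ` P) = (\<Sum>c\<in>P. f (Xp c))" by (simp add: sum.reindex inj_on_def)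
  finally show ?thesis .
qed

lemma ndvd_small: "0 < a \<Longrightarrow> a < N \<Longrightarrow> \<not> int N dvd int a"
  by (metis of_nat_dvd_iff nat_dvd_not_less)

lemma fc_even:
  assumes "even q" "2 \<le> q"
  shows "fcodeg q s = (\<Sum>c\<in>{1..q div 2}. (cmod (ftable q (Xm c) s))^2)
     + (\<Sum>c\<in>{1..(q-2) div 2}. (cmod (ftable q (Xp c) s))^2)
     + (cmod (ftable q X1 s))^2 + (cmod (ftable q Xq s))^2"
proof -
  have "frows q = {X1} \<union> Xm ` {1..q div 2} \<union> {Xq} \<union> Xp ` {1..(q-2) div 2}"
    using assms by (simp add: frows_def)
  then show ?thesis unfolding fcodeg_def by (simp only: sum_rows_even finite_atLeastAtMost)
qed

lemma even_C1: assumes "even q" "2 \<le> q" shows "fcodeg q C1 = q"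
proof -
  obtain t where t: "q = 2*t" "t \<ge> 1" using assms by (auto elim: evenE)
  then have "q div 2 = t" "(q-2) div 2 = t - 1" by auto
  then show ?thesis using assms t by (simp add: fc_even ftable_def of_nat_diff)
qed



lemma cmod_negneg[simp]: "cmod (- a - b) = cmod (a + b)"
proof -
  have "- a - b = - (a + b)" by simp
  then show ?thesis by (simp only: norm_minus_cancel)
qed

lemma even_A: assumes "even q" "2 \<le> q" "1 \<le> k" "k \<le> (q-2) div 2"
  shows "fcodeg q (A k) = real q - 1"
proof -
  obtain t where t: "q = 2*t" "t \<ge> 1" using assms by (auto elim: evenE)
  then have t2: "q div 2 = t" "(q-2) div 2 = t - 1" by auto
  have K: "(\<Sum>c=1..t-1. (cmod (zeta (q-1) (int (k*c)) + zeta (q-1) (- int (k*c))))^2)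
         = real (2*(t-1)) - (if q-1 = 2*(t-1)+1 then 1 else 2)"
  proof (rule key)
    show "q - 1 > 0" using assms by simp
    show "int (q-1) dvd int (2*k*(q-1))" by simp
    show "\<not> int (q-1) dvd int (2*k)" using assms t2 by (intro ndvd_small) auto
    show "q-1 = 2*(t-1)+1 \<or> (q-1 = 2*(t-1)+2 \<and> int (q-1) dvd int (2*k*((t-1)+1)))" using t by auto
  qed
  have X1: "ftable q X1 (A k) = 1" using assms by (simp add: ftable_def)
  have Xq: "ftable q Xq (A k) = 1" using assms by (simp add: ftable_def)
  have Xm: "ftable q (Xm c) (A k) = 0" for c using assms by (simp add: ftable_def)
  have Xp: "ftable q (Xp c) (A k) = zeta (q-1) (int (k*c)) + zeta (q-1) (- int (k*c))" for c
    using assms unfolding ftable_def Let_def by simp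
  have "fcodeg q (A k) = 0 + real (2*(t-1)) - 1 + 1 + 1"
    unfolding fc_even[OF assms(1,2)] X1 Xq Xm Xp t2 K using t by simp
  then show ?thesis using t by (simp add: of_nat_diff)
qed

lemma even_B: assumes "even q" "2 \<le> q" "1 \<le> k" "k \<le> q div 2"
  shows "fcodeg q (B k) = real q + 1"
proof -
  obtain t where t: "q = 2*t" "t \<ge> 1" using assms by (auto elim: evenE)
  then have t2: "q div 2 = t" "(q-2) div 2 = t - 1" by auto
  have K: "(\<Sum>c=1..t. (cmod (zeta (q+1) (int (k*c)) + zeta (q+1) (- int (k*c))))^2)
         = real (2*t) - (if q+1 = 2*t+1 then 1 else 2)"
  proof (rule key)
    show "q + 1 > 0" using assms by simp
    show "int (q+1) dvd int (2*k*(q+1))" unfolding of_nat_dvd_iff by (rule dvd_triv_right)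
    show "\<not> int (q+1) dvd int (2*k)" using assms t2 by (intro ndvd_small) auto
    show "q+1 = 2*t+1 \<or> (q+1 = 2*t+2 \<and> int (q+1) dvd int (2*k*(t+1)))" using t by auto
  qed
  have X1: "ftable q X1 (B k) = 1" using assms by (simp add: ftable_def)
  have Xq: "ftable q Xq (B k) = -1" using assms by (simp add: ftable_def)
  have Xp: "ftable q (Xp c) (B k) = 0" for c using assms by (simp add: ftable_def)
  have Xm: "cmod (ftable q (Xm c) (B k)) = cmod (zeta (q+1) (int (k*c)) + zeta (q+1) (- int (k*c)))" for c
    using assms unfolding ftable_def Let_def by simp
  have "fcodeg q (B k) = real (2*t) - 1 + 0 + 1 + 1"
    unfolding fc_even[OF assms(1,2)] X1 Xq Xm Xp t2 K using t by simp
  then show ?thesis using t by (simp add: of_nat_diff)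
qed

lemma even_C0: assumes "even q" "2 \<le> q"
  shows "fcodeg q C0 \<ge> real q ^ 2"
proof -
  have Xq: "ftable q Xq C0 = of_nat q" using assms by (simp add: ftable_def)
  show ?thesis unfolding fc_even[OF assms] Xq by (simp add: sum_nonneg add_nonneg_nonneg)
qed

lemma sum_cols_even:
  assumes "finite I" "finite J"
  shows "sum f ({C0, C1} \<union> A ` I \<union> B ` J) = f C0 + f C1 + (\<Sum>k\<in>I. f (A k)) + (\<Sum>k\<in>J. f (B k))"
proof -
  have "sum f ({C0, C1} \<union> A ` I \<union> B ` J) = sum f ({C0, C1} \<union> A ` I) + sum f (B ` J)"
    using assms by (intro sum.union_disjoint) auto
  also have "sum f ({C0, C1} \<union> A ` I) = sum f {C0, C1} + sum f (A ` I)"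
    using assms by (intro sum.union_disjoint) auto
  also have "sum f (A ` I) = (\<Sum>k\<in>I. f (A k))" by (simp add: sum.reindex inj_on_def)
  also have "sum f (B ` J) = (\<Sum>k\<in>J. f (B k))" by (simp add: sum.reindex inj_on_def)
  finally show ?thesis by simp
qed

lemma bnd1: fixes r :: real assumes "r \<ge> 2" shows "(r-1) * (1/(2*r-1)^2) \<le> 1/8"
proof -
  have p: "(2*r-1)^2 > 0" using assms by simp
  have "(2*r-3)^2 \<ge> 0" by simp
  then have "8*(r-1) \<le> (2*r-1)^2" by (simp add: power2_eq_square algebra_simps)
  then show ?thesis using p by (simp add: field_simps)
qed

lemma bnd2: fixes r :: real assumes "r \<ge> 1" shows "r * (1/(2*r+1)^2) \<le> 1/9"
proof -
  have p: "(2*r+1)^2 > 0" using assms by (simp add: add_pos_nonneg)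
  have "(4*r-1)*(r-1) \<ge> 0" using assms by simp
  then have "9*r \<le> (2*r+1)^2" by (simp add: power2_eq_square algebra_simps)
  then show ?thesis using p by (simp add: field_simps)
qed

lemma main_even: assumes "even q" "2 \<le> q"
  shows "2 * (\<Sum>s\<in>fcols q. 1 / (fcodeg q s)^2) \<le> 1 + 1 / fcodeg q C0"
proof -
  obtain t where t: "q = 2*t" "t \<ge> 1" using assms by (auto elim: evenE)
  then have t2: "q div 2 = t" "(q-2) div 2 = t - 1" by auto
  have fc: "fcols q = {C0, C1} \<union> A ` {1..t-1} \<union> B ` {1..t}"
    using assms t2 by (simp add: fcols_def)
  define c0 where "c0 = fcodeg q C0"
  have c0: "c0 \<ge> 4 * real t ^ 2" using even_C0[OF assms] t unfolding c0_def by simp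
  have SA: "(\<Sum>k\<in>{1..t-1}. 1 / (fcodeg q (A k))^2) = real (t-1) * (1 / (2*real t - 1)^2)"
  proof -
    have "(\<Sum>k\<in>{1..t-1}. 1 / (fcodeg q (A k))^2) = (\<Sum>k\<in>{1..t-1}. 1 / (2*real t - 1)^2)"
      using even_A[OF assms] t t2 by (intro sum.cong) auto
    then show ?thesis by simp
  qed
  have SB: "(\<Sum>k\<in>{1..t}. 1 / (fcodeg q (B k))^2) = real t * (1 / (2*real t + 1)^2)"
  proof -
    have "(\<Sum>k\<in>{1..t}. 1 / (fcodeg q (B k))^2) = (\<Sum>k\<in>{1..t}. 1 / (2*real t + 1)^2)"
      using even_B[OF assms] t t2 by (intro sum.cong) auto
    then show ?thesis by simp
  qed
  have S: "(\<Sum>s\<in>fcols q. 1 / (fcodeg q s)^2)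
      = 1 / c0^2 + 1/(2*real t)^2 + real (t-1) * (1 / (2*real t - 1)^2) + real t * (1 / (2*real t + 1)^2)"
    unfolding fc sum_cols_even[OF finite_atLeastAtMost finite_atLeastAtMost] SA SB c0_def
    using even_C1[OF assms] t by simp
  have c0p: "c0 \<ge> 4" using c0 t
    by (smt (verit) of_nat_le_1_iff one_le_power real_of_nat_ge_one_iff)
  have "(4::real)^2 \<le> c0^2" using c0p by (intro power_mono) auto
  then have i0: "1 / c0^2 \<le> 1/16" using c0p by (simp add: field_simps)
  have i0': "1 / c0 \<ge> 0" using c0p by simp
  have iB: "real t * (1 / (2*real t + 1)^2) \<le> 1/9" using t by (intro bnd2) simp
  show ?thesis
  proof (cases "t = 1")
    case True
    have e: "1/(2*real t)^2 = 1/4" "real (t-1) * (1 / (2*real t - 1)^2) = 0"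
      "real t * (1 / (2*real t + 1)^2) = 1/9" using True by simp_all
    have "\<And>(a::real) (b::real). a \<le> 1/16 \<Longrightarrow> 0 \<le> b \<Longrightarrow> 2 * (a + 1/4 + 0 + 1/9) \<le> 1 + b" by (simp add: field_simps)
    then show ?thesis unfolding S c0_def[symmetric] e using i0 i0' by blast
  next
    case False
    then have tt: "real t \<ge> 2" using t by simp
    have "(2::real)^2 \<le> real t ^2" using tt by (intro power_mono) auto
    then have c0b: "c0 \<ge> 16" using c0 by simp
    have "(16::real)^2 \<le> c0^2" using c0b by (intro power_mono) auto
    then have i0b: "1 / c0^2 \<le> 1/256" using c0b by (simp add: field_simps)
    have iA: "real (t-1) * (1 / (2*real t - 1)^2) \<le> 1/8" using bnd1[OF tt] t by (simp add: of_nat_diff)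
    have "(4::real)^2 \<le> (2*real t)^2" using tt by (intro power_mono) auto
    then have iq: "1/(2*real t)^2 \<le> 1/16" using tt by (simp add: field_simps)
    have "\<And>(a::real) (b::real) (c::real) (d::real) (e::real). a \<le> 1/256 \<Longrightarrow> 0 \<le> b \<Longrightarrow> c \<le> 1/8 \<Longrightarrow> d \<le> 1/16
       \<Longrightarrow> e \<le> 1/9 \<Longrightarrow> 2 * (a + d + c + e) \<le> 1 + b" by (simp add: field_simps)
    then show ?thesis unfolding S c0_def[symmetric] using i0b i0' iA iq iB by blast
  qed
qed

lemma fc_o3:
  assumes "q = 4*u+3"
  shows "fcodeg q s = (cmod (ftable q X1 s))^2 + (cmod (ftable q (Xh 1) s))^2 + (cmod (ftable q (Xh 2) s))^2
     + (\<Sum>c\<in>{1..u}. (cmod (ftable q (Xm c) s))^2) + (cmod (ftable q Xq s))^2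
     + (\<Sum>c\<in>{1..u}. (cmod (ftable q (Xp c) s))^2)"
proof -
  have "frows q = {X1} \<union> Xh ` {1,2} \<union> Xm ` {1..u} \<union> {Xq} \<union> Xp ` {1..u}"
    using assms by (simp add: frows_def)
  then show ?thesis unfolding fcodeg_def by (simp only: sum_rows_odd finite_atLeastAtMost)
qed

lemma o3_D: assumes "q = 4*u+3" "k \<in> {1,2}"
  shows "fcodeg q (D k) = real q"
proof -
  have ne: "\<not> even q" "q mod 4 = 3" using assms by auto
  have X1: "ftable q X1 (D k) = 1" using ne by (simp add: ftable_def)
  have Xq: "ftable q Xq (D k) = 0" using ne by (simp add: ftable_def)
  have Xm: "ftable q (Xm c) (D k) = -1" for c using ne by (simp add: ftable_def)
  have Xp: "ftable q (Xp c) (D k) = 1" for c using ne by (simp add: ftable_def)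
  have sq: "sqrt (real q) ^ 2 = real q" by simp
  have h: "(cmod ((-1 + \<i> * s * complex_of_real (sqrt (real q))) / 2))^2 = (1 + real q) / 4"
    if "s = 1 \<or> s = -1" for s :: complex
    using that by (auto simp: cmod_power2 power_divide sq)
  have Xh: "(cmod (ftable q (Xh c) (D k)))^2 = (1 + real q) / 4" if "c \<in> {1,2}" for c
  proof -
    have "ftable q (Xh c) (D k) = (-1 + \<i> * (-1)^(k+c) * complex_of_real (sqrt (real q))) / 2"
      using ne by (simp add: ftable_def Let_def)
    moreover have "(-1::complex)^(k+c) = 1 \<or> (-1::complex)^(k+c) = -1"
      by (metis neg_one_even_power neg_one_odd_power)
    ultimately show ?thesis using h by metis
  qed
  have Xh1: "(cmod (ftable q (Xh 1) (D k)))^2 = (1 + real q) / 4" using Xh by simp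
  have Xh2: "(cmod (ftable q (Xh 2) (D k)))^2 = (1 + real q) / 4" using Xh by simp
  have "fcodeg q (D k) = 1 + (1 + real q) / 4 + (1 + real q) / 4 + real u + 0 + real u"
    unfolding fc_o3[OF assms(1)] X1 Xq Xm Xp Xh1 Xh2 by simp
  then show ?thesis using assms by simp
qed

lemma o3_A: assumes "q = 4*u+3" "1 \<le> k" "k \<le> u"
  shows "fcodeg q (A k) = 2 * real u + 1"
proof -
  have ne: "\<not> even q" "q mod 4 = 3" using assms by auto
  have K: "(\<Sum>c=1..u. (cmod (zeta (q-1) (int (2*k*c)) + zeta (q-1) (- int (2*k*c))))^2)
         = real (2*u) - (if 2*u+1 = 2*u+1 then 1 else 2)"
  proof (rule key)
    show "q - 1 > 0" using assms by simp
    have "2*(2*k)*(2*u+1) = 2*k*(q-1)" using assms by simp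
    then show "int (q-1) dvd int (2*(2*k)*(2*u+1))" unfolding of_nat_dvd_iff by simp
    show "\<not> int (q-1) dvd int (2*(2*k))" using assms by (intro ndvd_small) auto
    show "2*u+1 = 2*u+1 \<or> (2*u+1 = 2*u+2 \<and> int (q-1) dvd int (2*(2*k)*(u+1)))" by simp
  qed
  have X1: "ftable q X1 (A k) = 1" using ne by (simp add: ftable_def)
  have Xq: "ftable q Xq (A k) = 1" using ne by (simp add: ftable_def)
  have Xh: "ftable q (Xh c) (A k) = 0" for c using ne by (simp add: ftable_def)
  have Xm: "ftable q (Xm c) (A k) = 0" for c using ne by (simp add: ftable_def)
  have Xp: "ftable q (Xp c) (A k) = zeta (q-1) (int (2*k*c)) + zeta (q-1) (- int (2*k*c))" for c
    using ne unfolding ftable_def Let_def by simp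
  have "fcodeg q (A k) = 1 + 0 + 0 + 0 + 1 + (real (2*u) - 1)"
    unfolding fc_o3[OF assms(1)] X1 Xq Xm Xp Xh K by simp
  then show ?thesis by simp
qed

lemma o3_B: assumes "q = 4*u+3" "1 \<le> k" "k \<le> u"
  shows "fcodeg q (B k) = 2 * real u + 2"
proof -
  have ne: "\<not> even q" "q mod 4 = 3" using assms by auto
  have K: "(\<Sum>c=1..u. (cmod (zeta (q+1) (int (2*k*c)) + zeta (q+1) (- int (2*k*c))))^2)
         = real (2*u) - (if 2*u+2 = 2*u+1 then 1 else 2)"
  proof (rule key)
    show "q + 1 > 0" using assms by simp
    have e: "2*(2*k)*(2*u+2) = 2*k*(q+1)" using assms by (simp add: algebra_simps)
    show "int (q+1) dvd int (2*(2*k)*(2*u+2))" unfolding of_nat_dvd_iff e by (rule dvd_triv_right)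
    show "\<not> int (q+1) dvd int (2*(2*k))" using assms by (intro ndvd_small) auto
    have e2: "2*(2*k)*(u+1) = k*(q+1)" using assms by (simp add: algebra_simps)
    have "int (q+1) dvd int (2*(2*k)*(u+1))" unfolding of_nat_dvd_iff e2 by (rule dvd_triv_right)
    then show "2*u+2 = 2*u+1 \<or> (2*u+2 = 2*u+2 \<and> int (q+1) dvd int (2*(2*k)*(u+1)))" by simp
  qed
  have X1: "ftable q X1 (B k) = 1" using ne by (simp add: ftable_def)
  have Xq: "ftable q Xq (B k) = -1" using ne by (simp add: ftable_def)
  have Xh: "cmod (ftable q (Xh c) (B k)) = 1" for c using ne by (simp add: ftable_def norm_power)
  have Xp: "ftable q (Xp c) (B k) = 0" for c using ne by (simp add: ftable_def)
  have Xm: "cmod (ftable q (Xm c) (B k)) = cmod (zeta (q+1) (int (2*k*c)) + zeta (q+1) (- int (2*k*c)))" for c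
    using ne unfolding ftable_def Let_def by simp
  have "fcodeg q (B k) = 1 + 1 + 1 + (real (2*u) - 2) + 1 + 0"
    unfolding fc_o3[OF assms(1)] X1 Xq Xm Xp Xh K by simp
  then show ?thesis by simp
qed

lemma o3_E: assumes "q = 4*u+3"
  shows "fcodeg q E = real q + 1"
proof -
  have ne: "\<not> even q" "q mod 4 = 3" using assms by auto
  have X1: "ftable q X1 E = 1" using ne by (simp add: ftable_def)
  have Xq: "ftable q Xq E = -1" using ne by (simp add: ftable_def)
  have Xh: "cmod (ftable q (Xh c) E) = 1" for c using ne by (simp add: ftable_def norm_power)
  have Xp: "ftable q (Xp c) E = 0" for c using ne by (simp add: ftable_def)
  have Xm: "cmod (ftable q (Xm c) E) = 2" for c using ne by (simp add: ftable_def norm_power norm_mult)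
  have "fcodeg q E = 1 + 1 + 1 + 4 * real u + 1 + 0"
    unfolding fc_o3[OF assms(1)] X1 Xq Xm Xp Xh by simp
  then show ?thesis using assms by simp
qed

lemma o3_C0: assumes "q = 4*u+3"
  shows "fcodeg q C0 \<ge> real q ^ 2"
proof -
  have ne: "\<not> even q" "q mod 4 = 3" using assms by auto
  have Xq: "ftable q Xq C0 = of_nat q" using ne by (simp add: ftable_def)
  show ?thesis unfolding fc_o3[OF assms] Xq by (simp add: sum_nonneg add_nonneg_nonneg)
qed

lemma sum_cols_o3:
  assumes "finite I" "finite J"
  shows "sum f ({C0} \<union> D ` {1,2} \<union> A ` I \<union> B ` J \<union> {E})
     = f C0 + f (D 1) + f (D 2) + (\<Sum>k\<in>I. f (A k)) + (\<Sum>k\<in>J. f (B k)) + f E"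
proof -
  have "sum f ({C0} \<union> D ` {1,2} \<union> A ` I \<union> B ` J \<union> {E}) = sum f ({C0} \<union> D ` {1,2} \<union> A ` I \<union> B ` J) + f E"
    using assms by (subst sum.union_disjoint) auto
  also have "sum f ({C0} \<union> D ` {1,2} \<union> A ` I \<union> B ` J) = sum f ({C0} \<union> D ` {1,2} \<union> A ` I) + sum f (B ` J)"
    using assms by (intro sum.union_disjoint) auto
  also have "sum f ({C0} \<union> D ` {1,2} \<union> A ` I) = sum f ({C0} \<union> D ` {1,2}) + sum f (A ` I)"
    using assms by (intro sum.union_disjoint) auto
  also have "sum f ({C0} \<union> D ` {1,2}) = f C0 + f (D 1) + f (D 2)" by (simp add: algebra_simps)
  also have "sum f (A ` I) = (\<Sum>k\<in>I. f (A k))" by (simp add: sum.reindex inj_on_def)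
  also have "sum f (B ` J) = (\<Sum>k\<in>J. f (B k))" by (simp add: sum.reindex inj_on_def)
  finally show ?thesis by simp
qed

lemma main_o3: assumes "q = 4*u+3"
  shows "2 * (\<Sum>s\<in>fcols q. 1 / (fcodeg q s)^2) \<le> 1 + 1 / fcodeg q C0"
proof -
  have ne: "\<not> even q" "q mod 4 = 3" using assms by auto
  have fc: "fcols q = {C0} \<union> D ` {1,2} \<union> A ` {1..u} \<union> B ` {1..u} \<union> {E}"
    using assms ne by (simp add: fcols_def)
  define c0 where "c0 = fcodeg q C0"
  have c0: "c0 \<ge> real q ^ 2" using o3_C0[OF assms] unfolding c0_def by simp
  have SA: "(\<Sum>k\<in>{1..u}. 1 / (fcodeg q (A k))^2) = real u * (1 / (2*real u + 1)^2)"
  proof -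
    have "(\<Sum>k\<in>{1..u}. 1 / (fcodeg q (A k))^2) = (\<Sum>k\<in>{1..u}. 1 / (2*real u + 1)^2)"
      using o3_A[OF assms] by (intro sum.cong) auto
    then show ?thesis by simp
  qed
  have SB: "(\<Sum>k\<in>{1..u}. 1 / (fcodeg q (B k))^2) = real u * (1 / (2*real u + 2)^2)"
  proof -
    have "(\<Sum>k\<in>{1..u}. 1 / (fcodeg q (B k))^2) = (\<Sum>k\<in>{1..u}. 1 / (2*real u + 2)^2)"
      using o3_B[OF assms] by (intro sum.cong) auto
    then show ?thesis by simp
  qed
  have S: "(\<Sum>s\<in>fcols q. 1 / (fcodeg q s)^2)
      = 1 / c0^2 + 1/(real q)^2 + 1/(real q)^2 + real u * (1 / (2*real u + 1)^2)
        + real u * (1 / (2*real u + 2)^2) + 1 / (real q + 1)^2"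
    unfolding fc sum_cols_o3[OF finite_atLeastAtMost finite_atLeastAtMost] SA SB c0_def
    using o3_D[OF assms] o3_E[OF assms] by simp
  have q3: "real q \<ge> 3" using assms by simp
  have "(3::real)^2 \<le> real q ^ 2" using q3 by (intro power_mono) auto
  then have c0p: "c0 \<ge> 9" using c0 by simp
  have i0': "1 / c0 \<ge> 0" using c0p by simp
  show ?thesis
  proof (cases "u = 0")
    case True
    have "(9::real)^2 \<le> c0^2" using c0p by (intro power_mono) auto
    then have i0: "1 / c0^2 \<le> 1/81" using c0p by (simp add: field_simps)
    have e: "real q = 3" "real u = 0" using True assms by simp_all
    have "\<And>(a::real) (b::real). a \<le> 1/81 \<Longrightarrow> 0 \<le> b \<Longrightarrow>
       2 * (a + 1/3^2 + 1/3^2 + 0 * (1 / (2*0 + 1)^2) + 0 * (1 / (2*0 + 2)^2) + 1/(3+1)^2) \<le> 1 + b"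
      by (simp add: field_simps)
    then show ?thesis unfolding S c0_def[symmetric] e using i0 i0' by blast
  next
    case False
    then have uu: "real u \<ge> 1" by simp
    then have q7: "real q \<ge> 7" using assms by simp
    have "(7::real)^2 \<le> real q ^ 2" using q7 by (intro power_mono) auto
    then have c0b: "c0 \<ge> 49" and iq: "1/(real q)^2 \<le> 1/49" using c0 q7 by (simp_all add: field_simps)
    have "(49::real)^2 \<le> c0^2" using c0b by (intro power_mono) auto
    then have i0: "1 / c0^2 \<le> 1/2401" using c0b by (simp add: field_simps)
    have iA: "real u * (1 / (2*real u + 1)^2) \<le> 1/8"
    proof -
      have "(2*real u - 1)^2 \<ge> 0" by simp
      then have "8 * real u \<le> (2*real u + 1)^2" by (simp add: power2_eq_square algebra_simps)
      then show ?thesis using uu by (simp add: field_simps)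
    qed
    have iB: "real u * (1 / (2*real u + 2)^2) \<le> 1/16"
    proof -
      have "(real u - 1)^2 \<ge> 0" by simp
      then have "16 * real u \<le> (2*real u + 2)^2" by (simp add: power2_eq_square algebra_simps)
      then show ?thesis using uu by (simp add: field_simps)
    qed
    have "(8::real)^2 \<le> (real q + 1)^2" using q7 by (intro power_mono) auto
    then have iE: "1 / (real q + 1)^2 \<le> 1/64" using q7 by (simp add: field_simps)
    have "\<And>(a::real) (b::real) (c::real) (d::real) (e::real) (f::real). a \<le> 1/2401 \<Longrightarrow> 0 \<le> b
       \<Longrightarrow> c \<le> 1/49 \<Longrightarrow> d \<le> 1/8 \<Longrightarrow> e \<le> 1/16 \<Longrightarrow> f \<le> 1/64
       \<Longrightarrow> 2 * (a + c + c + d + e + f) \<le> 1 + b" by (simp add: field_simps)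
    then show ?thesis unfolding S c0_def[symmetric] using i0 i0' iq iA iB iE by blast
  qed
qed

lemma fc_o1:
  assumes "q = 4*u+1" "u \<ge> 1"
  shows "fcodeg q s = (cmod (ftable q X1 s))^2 + (cmod (ftable q (Xh 1) s))^2 + (cmod (ftable q (Xh 2) s))^2
     + (\<Sum>c\<in>{1..u}. (cmod (ftable q (Xm c) s))^2) + (cmod (ftable q Xq s))^2
     + (\<Sum>c\<in>{1..u-1}. (cmod (ftable q (Xp c) s))^2)"
proof -
  have "(q-1) div 4 = u" "(q-5) div 4 = u - 1" using assms by auto
  then have "frows q = {X1} \<union> Xh ` {1,2} \<union> Xm ` {1..u} \<union> {Xq} \<union> Xp ` {1..u-1}"
    using assms by (simp add: frows_def)
  then show ?thesis unfolding fcodeg_def by (simp only: sum_rows_odd finite_atLeastAtMost)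
qed

lemma o1_D: assumes "q = 4*u+1" "u \<ge> 1" "k \<in> {1,2}"
  shows "fcodeg q (D k) = real q"
proof -
  have ne: "\<not> even q" "q mod 4 = 1" using assms by auto
  have X1: "ftable q X1 (D k) = 1" using ne by (simp add: ftable_def)
  have Xq: "ftable q Xq (D k) = 0" using ne by (simp add: ftable_def)
  have Xm: "ftable q (Xm c) (D k) = -1" for c using ne by (simp add: ftable_def)
  have Xp: "ftable q (Xp c) (D k) = 1" for c using ne by (simp add: ftable_def)
  have ent: "ftable q (Xh c) (D k) = complex_of_real ((1 + (-1)^(k+c) * sqrt (real q)) / 2)" for c
    using ne by (simp add: ftable_def Let_def)
  define r where "r = sqrt (real q)"
  define sg :: real where "sg = (-1)^(k+1)"
  have sg2: "sg^2 = 1" unfolding sg_def by (simp add: power_mult[symmetric])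
  have sg': "(-1::real)^(k+2) = - sg" unfolding sg_def by simp
  have r2: "r^2 = real q" unfolding r_def by simp
  have "(cmod (ftable q (Xh 1) (D k)))^2 + (cmod (ftable q (Xh 2) (D k)))^2
      = ((1 + sg * r)/2)^2 + ((1 + (- sg) * r)/2)^2"
    unfolding ent norm_of_real power2_abs sg' by (simp add: sg_def r_def)
  also have "\<dots> = (2 + 2 * sg^2 * r^2) / 4" by (simp add: power2_eq_square field_simps)
  also have "\<dots> = (1 + real q) / 2" unfolding sg2 r2 by simp
  finally have Xh: "(cmod (ftable q (Xh 1) (D k)))^2 + (cmod (ftable q (Xh 2) (D k)))^2 = (1 + real q) / 2" .
  have "fcodeg q (D k) = 1 + (1 + real q) / 2 + real u + 0 + real (u - 1)"
    unfolding fc_o1[OF assms(1,2)] X1 Xq Xm Xp using Xh by simp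
  then show ?thesis using assms by (simp add: of_nat_diff)
qed

lemma o1_A: assumes "q = 4*u+1" "1 \<le> k" "k \<le> u - 1"
  shows "fcodeg q (A k) = 2 * real u"
proof -
  have u: "u \<ge> 1" using assms by simp
  have ne: "\<not> even q" "q mod 4 = 1" using assms by auto
  have K: "(\<Sum>c=1..u-1. (cmod (zeta (q-1) (int (2*k*c)) + zeta (q-1) (- int (2*k*c))))^2)
         = real (2*(u-1)) - (if 2*u = 2*(u-1)+1 then 1 else 2)"
  proof (rule key)
    show "q - 1 > 0" using assms by simp
    have e: "2*(2*k)*(2*u) = 2*k*(q-1)" using assms by (simp add: algebra_simps)
    show "int (q-1) dvd int (2*(2*k)*(2*u))" unfolding of_nat_dvd_iff e by (rule dvd_triv_right)
    show "\<not> int (q-1) dvd int (2*(2*k))" using assms by (intro ndvd_small) auto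
    have e2: "2*(2*k)*(u-1+1) = k*(q-1)" using assms u by (simp add: algebra_simps)
    have "int (q-1) dvd int (2*(2*k)*(u-1+1))" unfolding of_nat_dvd_iff e2 by (rule dvd_triv_right)
    then show "2*u = 2*(u-1)+1 \<or> (2*u = 2*(u-1)+2 \<and> int (q-1) dvd int (2*(2*k)*(u-1+1)))" using u by (intro disjI2 conjI) auto
  qed
  have X1: "ftable q X1 (A k) = 1" using ne by (simp add: ftable_def)
  have Xq: "ftable q Xq (A k) = 1" using ne by (simp add: ftable_def)
  have Xh: "cmod (ftable q (Xh c) (A k)) = 1" for c using ne by (simp add: ftable_def norm_power)
  have Xm: "ftable q (Xm c) (A k) = 0" for c using ne by (simp add: ftable_def)
  have Xp: "ftable q (Xp c) (A k) = zeta (q-1) (int (2*k*c)) + zeta (q-1) (- int (2*k*c))" for c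
    using ne unfolding ftable_def Let_def by simp
  have "fcodeg q (A k) = 1 + 1 + 1 + 0 + 1 + (real (2*(u-1)) - 2)"
    unfolding fc_o1[OF assms(1) u] X1 Xq Xm Xp Xh K using u by simp
  then show ?thesis using u by (simp add: of_nat_diff)
qed

lemma o1_B: assumes "q = 4*u+1" "1 \<le> k" "k \<le> u"
  shows "fcodeg q (B k) = 2 * real u + 1"
proof -
  have u: "u \<ge> 1" using assms by simp
  have ne: "\<not> even q" "q mod 4 = 1" using assms by auto
  have K: "(\<Sum>c=1..u. (cmod (zeta (q+1) (int (2*k*c)) + zeta (q+1) (- int (2*k*c))))^2)
         = real (2*u) - (if 2*u+1 = 2*u+1 then 1 else 2)"
  proof (rule key)
    show "q + 1 > 0" using assms by simp
    have e: "2*(2*k)*(2*u+1) = 2*k*(q+1)" using assms by (simp add: algebra_simps)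
    show "int (q+1) dvd int (2*(2*k)*(2*u+1))" unfolding of_nat_dvd_iff e by (rule dvd_triv_right)
    show "\<not> int (q+1) dvd int (2*(2*k))" using assms by (intro ndvd_small) auto
    show "2*u+1 = 2*u+1 \<or> (2*u+1 = 2*u+2 \<and> int (q+1) dvd int (2*(2*k)*(u+1)))" by simp
  qed
  have X1: "ftable q X1 (B k) = 1" using ne by (simp add: ftable_def)
  have Xq: "ftable q Xq (B k) = -1" using ne by (simp add: ftable_def)
  have Xh: "ftable q (Xh c) (B k) = 0" for c using ne by (simp add: ftable_def)
  have Xp: "ftable q (Xp c) (B k) = 0" for c using ne by (simp add: ftable_def)
  have Xm: "cmod (ftable q (Xm c) (B k)) = cmod (zeta (q+1) (int (2*k*c)) + zeta (q+1) (- int (2*k*c)))" for c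
    using ne unfolding ftable_def Let_def by simp
  have "fcodeg q (B k) = 1 + 0 + 0 + (real (2*u) - 1) + 1 + 0"
    unfolding fc_o1[OF assms(1) u] X1 Xq Xm Xp Xh K by simp
  then show ?thesis by simp
qed

lemma o1_E: assumes "q = 4*u+1" "u \<ge> 1"
  shows "fcodeg q E = 4 * real u"
proof -
  have ne: "\<not> even q" "q mod 4 = 1" using assms by auto
  have X1: "ftable q X1 E = 1" using ne by (simp add: ftable_def)
  have Xq: "ftable q Xq E = 1" using ne by (simp add: ftable_def)
  have Xh: "cmod (ftable q (Xh c) E) = 1" for c using ne by (simp add: ftable_def norm_power)
  have Xm: "ftable q (Xm c) E = 0" for c using ne by (simp add: ftable_def)
  have Xp: "cmod (ftable q (Xp c) E) = 2" for c using ne by (simp add: ftable_def norm_power norm_mult)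
  have "fcodeg q E = 1 + 1 + 1 + 0 + 1 + 4 * real (u - 1)"
    unfolding fc_o1[OF assms] X1 Xq Xm Xp Xh by simp
  then show ?thesis using assms by (simp add: of_nat_diff)
qed

lemma o1_C0: assumes "q = 4*u+1" "u \<ge> 1"
  shows "fcodeg q C0 \<ge> real q ^ 2"
proof -
  have ne: "\<not> even q" "q mod 4 = 1" using assms by auto
  have Xq: "ftable q Xq C0 = of_nat q" using ne by (simp add: ftable_def)
  show ?thesis unfolding fc_o1[OF assms] Xq by (simp add: sum_nonneg add_nonneg_nonneg)
qed

lemma sum_cols_o1:
  assumes "finite I" "finite J"
  shows "sum f ({C0} \<union> D ` {1,2} \<union> A ` I \<union> {E} \<union> B ` J)
     = f C0 + f (D 1) + f (D 2) + (\<Sum>k\<in>I. f (A k)) + (\<Sum>k\<in>J. f (B k)) + f E"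
proof -
  have "{C0} \<union> D ` {1,2} \<union> A ` I \<union> {E} \<union> B ` J = {C0} \<union> D ` {1,2} \<union> A ` I \<union> B ` J \<union> {E}" by auto
  then show ?thesis using sum_cols_o3[OF assms] by simp
qed

lemma main_o1: assumes "q = 4*u+1" "u \<ge> 1"
  shows "2 * (\<Sum>s\<in>fcols q. 1 / (fcodeg q s)^2) \<le> 1 + 1 / fcodeg q C0"
proof -
  have ne: "\<not> even q" "q mod 4 = 1" using assms by auto
  have "(q-1) div 4 = u" "(q-5) div 4 = u - 1" using assms by auto
  then have fc: "fcols q = {C0} \<union> D ` {1,2} \<union> A ` {1..u-1} \<union> {E} \<union> B ` {1..u}"
    using assms ne by (simp add: fcols_def)
  define c0 where "c0 = fcodeg q C0"
  have c0: "c0 \<ge> real q ^ 2" using o1_C0[OF assms] unfolding c0_def by simp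
  have SA: "(\<Sum>k\<in>{1..u-1}. 1 / (fcodeg q (A k))^2) = real (u-1) * (1 / (2*real u)^2)"
  proof -
    have "(\<Sum>k\<in>{1..u-1}. 1 / (fcodeg q (A k))^2) = (\<Sum>k\<in>{1..u-1}. 1 / (2*real u)^2)"
      using o1_A[OF assms(1)] by (intro sum.cong) auto
    then show ?thesis by simp
  qed
  have SB: "(\<Sum>k\<in>{1..u}. 1 / (fcodeg q (B k))^2) = real u * (1 / (2*real u + 1)^2)"
  proof -
    have "(\<Sum>k\<in>{1..u}. 1 / (fcodeg q (B k))^2) = (\<Sum>k\<in>{1..u}. 1 / (2*real u + 1)^2)"
      using o1_B[OF assms(1)] by (intro sum.cong) auto
    then show ?thesis by simp
  qed
  have S: "(\<Sum>s\<in>fcols q. 1 / (fcodeg q s)^2)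
      = 1 / c0^2 + 1/(real q)^2 + 1/(real q)^2 + real (u-1) * (1 / (2*real u)^2)
        + real u * (1 / (2*real u + 1)^2) + 1 / (4 * real u)^2"
    unfolding fc sum_cols_o1[OF finite_atLeastAtMost finite_atLeastAtMost] SA SB c0_def
    using o1_D[OF assms] o1_E[OF assms] by simp
  have q5: "real q \<ge> 5" using assms by simp
  have "(5::real)^2 \<le> real q ^ 2" using q5 by (intro power_mono) auto
  then have c0p: "c0 \<ge> 25" and iq5: "1/(real q)^2 \<le> 1/25" using c0 q5 by (simp_all add: field_simps)
  have i0': "1 / c0 \<ge> 0" using c0p by simp
  have uu: "real u \<ge> 1" using assms by simp
  have iB: "real u * (1 / (2*real u + 1)^2) \<le> 1/8"
  proof -
    have "(2*real u - 1)^2 \<ge> 0" by simp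
    then have "8 * real u \<le> (2*real u + 1)^2" by (simp add: power2_eq_square algebra_simps)
    then show ?thesis using uu by (simp add: field_simps)
  qed
  show ?thesis
  proof (cases "u = 1")
    case True
    have "(25::real)^2 \<le> c0^2" using c0p by (intro power_mono) auto
    then have i0: "1 / c0^2 \<le> 1/625" using c0p by (simp add: field_simps)
    have e: "real q = 5" "real u = 1" "real (u-1) = 0" using True assms by simp_all
    have "\<And>(a::real) (b::real). a \<le> 1/625 \<Longrightarrow> 0 \<le> b \<Longrightarrow>
       2 * (a + 1/5^2 + 1/5^2 + 0 * (1 / (2*1)^2) + 1 * (1 / (2*1 + 1)^2) + 1/(4*1)^2) \<le> 1 + b"
      by (simp add: field_simps)
    then show ?thesis unfolding S c0_def[symmetric] e using i0 i0' by blast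
  next
    case False
    then have u2: "real u \<ge> 2" using assms by simp
    then have q9: "real q \<ge> 9" using assms by simp
    have "(9::real)^2 \<le> real q ^ 2" using q9 by (intro power_mono) auto
    then have c0b: "c0 \<ge> 81" and iq: "1/(real q)^2 \<le> 1/81" using c0 q9 by (simp_all add: field_simps)
    have "(81::real)^2 \<le> c0^2" using c0b by (intro power_mono) auto
    then have i0: "1 / c0^2 \<le> 1/6561" using c0b by (simp add: field_simps)
    have iA: "real (u-1) * (1 / (2*real u)^2) \<le> 1/16"
    proof -
      have "(real u - 2)^2 \<ge> 0" by simp
      then have "16 * (real u - 1) \<le> (2*real u)^2" by (simp add: power2_eq_square algebra_simps)
      then show ?thesis using u2 assms by (simp add: field_simps of_nat_diff)
    qed
    have "(8::real)^2 \<le> (4 * real u)^2" using u2 by (intro power_mono) auto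
    then have iE: "1 / (4 * real u)^2 \<le> 1/64" using u2 by (simp add: field_simps)
    have "\<And>(a::real) (b::real) (c::real) (d::real) (e::real) (f::real). a \<le> 1/6561 \<Longrightarrow> 0 \<le> b
       \<Longrightarrow> c \<le> 1/81 \<Longrightarrow> d \<le> 1/16 \<Longrightarrow> e \<le> 1/8 \<Longrightarrow> f \<le> 1/64
       \<Longrightarrow> 2 * (a + c + c + d + e + f) \<le> 1 + b" by (simp add: field_simps)
    then show ?thesis unfolding S c0_def[symmetric] using i0 i0' iq iA iB iE by blast
  qed
qed

theorem proposition7p5:
  fixes q :: nat
  assumes "2 \<le> q"
  shows "2 * (\<Sum>s\<in>fcols q. 1 / (fcodeg q s)^2) \<le> 1 + 1 / fcodeg q C0"
proof (cases "even q")
  case True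
  then show ?thesis using main_even assms by blast
next
  case False
  then have "q mod 4 = 1 \<or> q mod 4 = 3" by presburger
  then show ?thesis
  proof
    assume h: "q mod 4 = 1"
    define u where "u = q div 4"
    have "q = 4*u+1" "u \<ge> 1" using h assms unfolding u_def by presburger+
    then show ?thesis by (rule main_o1)
  next
    assume h: "q mod 4 = 3"
    define u where "u = q div 4"
    have "q = 4*u+3" using h unfolding u_def by presburger
    then show ?thesis by (rule main_o3)
  qed
qed

end
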